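(* Let $T=T_\lambda(r,m)$ with $r=m$, $n\ge3$, and suppose $T$ acts linearly and inner faithfully on $\Bbbk\overline{Q}$ by $$g\cdot e_i=e_{i+d},\quad g\cdot a_i=\mu_i a_{i+d},\quad g\cdot a_i^*=\mu_i^*a_{i+d}^*,$$ $$x\cdot e_i=\gamma_i(e_i-\lambda^{-1}e_{i+d}),\quad x\cdot a_i=\gamma_{i+1}a_i-\gamma_i\lambda^{-1}(g\cdot a_i),\quad x\cdot a_i^*=\gamma_i a_i^*-\gamma_{i+1}\lambda^{-1}(g\cdot a_i^* ),$$ for some integer $0<d\le n-1$ and scalars $\mu_i,\mu_i^*,\gamma_i\in\Bbbk^\times$, and that this action descends to an inner faithful action on $\Pi_Q$. Let $\tau=\gcd(n,d)$, so that $e_0,\dots,e_{\tau-1}$ form a complete set of representatives of the $g$-orbits on vertices. Then $\{\phi_0(e_i): i=0,\dots,\tau-1\}$ is a $\Bbbk$-basis of the degree-$0$ part $((\Pi_Q)^T)_0$ of the invariant ring; in particular the number of vertices supporting $(\Pi_Q)^T$ equals the number of $g$-orbits of vertices.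
   Context: Let $\Bbbk$ be a field, $r>1$ and $m$ positive integers with $r\mid m$, and $\lambda\in\Bbbk$ a primitive $r$-th root of unity, with $r$ coprime to the characteristic of $\Bbbk$. The generalized Taft algebra $T=T_\lambda(r,m)$ is the Hopf algebra generated by $g,x$ with relations $gx=\lambda xg$, $g^m=1$, $x^r=0$, $\Delta(g)=g\otimes g$, $\Delta(x)=1\otimes x+x\otimes g$, $\varepsilon(g)=1,\varepsilon(x)=0$, $S(g)=g^{-1}$, $S(x)=-xg^{-1}$. An action of $T$ on an algebra $A$ is a $T$-module algebra structure; so $g$ acts by an algebra automorphism and $x\cdot(ab)=a(x\cdot b)+(x\cdot a)(g\cdot b)$. It is inner faithful if no nonzero Hopf ideal $I$ of $T$ satisfies $I\cdot A=0$. Linear means $g$ preserves path length and $x$ maps vertices into the span of vertices and arrows into the span of vertices and arrows. Vertex indices are taken modulo $n$. $\overline{Q}$ has vertices $0,\dots,n-1$ and arrows $a_i:i\to i+1$, $a_i^*:i+1\to i$; in $\Bbbk\overline{Q}$, $e_i$ is the trivial path at $i$ and $pq$ is concatenation ($p$ then $q$) if the target of $p$ is the source of $q$, else $0$. $\Pi_Q=\Bbbk\overline{Q}/(\Omega)$, graded by path length, with $(\Omega)$ generated by $a_i^*a_i-a_{i+1}a_{i+1}^*$; the action descends if $(\Omega)$ is stable under $g$ and $x$. The invariant ring is $(\Pi_Q)^T=\{a\in\Pi_Q:h\cdot a=\varepsilon(h)a\ \forall h\in T\}$. For a path $p$ and integer $\alpha$, $\phi_\alpha(p)=\sum_{i=0}^{r-1}\lambda^{-\alpha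 i}g^i(p)$. *)

theory Defs
  imports Main
begin

(* ===== The path algebra k\<overline>Q of the doubled cyclic quiver with n vertices =====
   A path is encoded as (v, w): start vertex v (< n) and a list of steps;
   True  = an arrow a_u : u -> u+1,
   False = an arrow a_{u-1}^* : u -> u-1   (indices mod n). *)

type_synonym path = "nat \<times> bool list"

definition tgt :: "nat \<Rightarrow> nat \<Rightarrow> bool list \<Rightarrow> nat" where
  "tgt n v w = foldl (\<lambda>u b. if b then (u + 1) mod n else (u + n - 1) mod n) v w"

definition pathalg :: "nat \<Rightarrow> (path \<Rightarrow> 'k::field) set" where
  "pathalg n = {f. finite {p. f p \<noteq> 0} \<and> (\<forall>v w. f (v, w) \<noteq> 0 \<longrightarrow> v < n)}"

definition padd :: "(path \<Rightarrow> 'k::field) \<Rightarrow> (path \<Rightarrow> 'k) \<Rightarrow> path \<Rightarrow> 'k" where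
  "padd f h = (\<lambda>p. f p + h p)"

definition psub :: "(path \<Rightarrow> 'k::field) \<Rightarrow> (path \<Rightarrow> 'k) \<Rightarrow> path \<Rightarrow> 'k" where
  "psub f h = (\<lambda>p. f p - h p)"

definition psmul :: "'k::field \<Rightarrow> (path \<Rightarrow> 'k) \<Rightarrow> path \<Rightarrow> 'k" where
  "psmul c f = (\<lambda>p. c * f p)"

definition pzero :: "path \<Rightarrow> 'k::field" where
  "pzero = (\<lambda>p. 0)"

text \<open>Concatenation product: pq = p then q (zero unless target of p = source of q).\<close>
definition pmul :: "nat \<Rightarrow> (path \<Rightarrow> 'k::field) \<Rightarrow> (path \<Rightarrow> 'k) \<Rightarrow> path \<Rightarrow> 'k" where
  "pmul n f h = (\<lambda>(v, w). \<Sum>k\<in>{0..length w}. f (v, take k w) * h (tgt n v (take k w), drop k w))"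

definition pone :: "nat \<Rightarrow> path \<Rightarrow> 'k::field" where
  "pone n = (\<lambda>(v, w). if v < n \<and> w = [] then 1 else 0)"

text \<open>trivial path e_i, arrow a_i : i -> i+1, arrow a_i^* : i+1 -> i (indices mod n)\<close>
definition vtx :: "nat \<Rightarrow> nat \<Rightarrow> path \<Rightarrow> 'k::field" where
  "vtx n i = (\<lambda>p. if p = (i mod n, []) then 1 else 0)"

definition arr :: "nat \<Rightarrow> nat \<Rightarrow> path \<Rightarrow> 'k::field" where
  "arr n i = (\<lambda>p. if p = (i mod n, [True]) then 1 else 0)"

definition arrs :: "nat \<Rightarrow> nat \<Rightarrow> path \<Rightarrow> 'k::field" where
  "arrs n i = (\<lambda>p. if p = ((i + 1) mod n, [False]) then 1 else 0)"

definition omega :: "nat \<Rightarrow> nat \<Rightarrow> path \<Rightarrow> 'k::field" where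
  "omega n i = psub (pmul n (arrs n i) (arr n i)) (pmul n (arr n (i + 1)) (arrs n (i + 1)))"

definition is_ideal :: "nat \<Rightarrow> (path \<Rightarrow> 'k::field) set \<Rightarrow> bool" where
  "is_ideal n I \<longleftrightarrow> I \<subseteq> pathalg n \<and> pzero \<in> I
     \<and> (\<forall>a\<in>I. \<forall>b\<in>I. padd a b \<in> I)
     \<and> (\<forall>c. \<forall>a\<in>I. psmul c a \<in> I)
     \<and> (\<forall>a\<in>I. \<forall>b\<in>pathalg n. pmul n a b \<in> I \<and> pmul n b a \<in> I)"

text \<open>the two-sided ideal (\<Omega>) of k\<overline>Q; \<Pi>_Q = k\<overline>Q / (\<Omega>)\<close>
definition OmegaIdeal :: "nat \<Rightarrow> (path \<Rightarrow> 'k::field) set" where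
  "OmegaIdeal n = \<Inter> {I. is_ideal n I \<and> (\<forall>i<n. omega n i \<in> I)}"

(* ===== The generalized Taft algebra T = T_lam(r,m) =====
   Elements are coefficient functions c on the PBW basis g^i x^j (i<m, j<r). *)

definition Tcar :: "nat \<Rightarrow> nat \<Rightarrow> (nat \<times> nat \<Rightarrow> 'k::field) set" where
  "Tcar m r = {c. \<forall>i j. c (i, j) \<noteq> 0 \<longrightarrow> i < m \<and> j < r}"

text \<open>product: g^i x^j g^k x^l = lam^(-jk) g^(i+k) x^(j+l), zero if j+l >= r\<close>
definition tmul :: "nat \<Rightarrow> nat \<Rightarrow> 'k::field \<Rightarrow> (nat \<times> nat \<Rightarrow> 'k) \<Rightarrow> (nat \<times> nat \<Rightarrow> 'k) \<Rightarrow> nat \<times> nat \<Rightarrow> 'k" where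
  "tmul m r lam c c' = (\<lambda>(a, b). if a < m \<and> b < r then
      (\<Sum>i<m. \<Sum>j<r. \<Sum>k<m. \<Sum>l<r.
         if (i + k) mod m = a \<and> j + l = b then c (i, j) * c' (k, l) * (inverse lam) ^ (j * k) else 0)
    else 0)"

definition teps :: "nat \<Rightarrow> (nat \<times> nat \<Rightarrow> 'k::field) \<Rightarrow> 'k" where
  "teps m c = (\<Sum>i<m. c (i, 0))"

text \<open>Gaussian binomials B(j,k) with (u+v)^j = sum_k B(j,k) u^(j-k) v^k when v u = q u v\<close>
fun qbinom :: "'k::field \<Rightarrow> nat \<Rightarrow> nat \<Rightarrow> 'k" where
  "qbinom q 0 0 = 1"
| "qbinom q 0 (Suc k) = 0"
| "qbinom q (Suc j) 0 = 1"
| "qbinom q (Suc j) (Suc k) = q ^ Suc k * qbinom q j (Suc k) + qbinom q j k"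

definition tcoprod :: "nat \<Rightarrow> nat \<Rightarrow> 'k::field \<Rightarrow> (nat \<times> nat \<Rightarrow> 'k) \<Rightarrow> (nat \<times> nat) \<times> (nat \<times> nat) \<Rightarrow> 'k" where
  "tcoprod m r lam c = (\<lambda>((a, b), (a', b')).
     if a < m \<and> b + b' < r \<and> a' = (a + b) mod m
     then c (a, b + b') * qbinom lam (b + b') b * (inverse lam) ^ (b' * b) else 0)"

definition tantipode :: "nat \<Rightarrow> nat \<Rightarrow> 'k::field \<Rightarrow> (nat \<times> nat \<Rightarrow> 'k) \<Rightarrow> nat \<times> nat \<Rightarrow> 'k" where
  "tantipode m r lam c = (\<lambda>(a, b). \<Sum>i<m. \<Sum>j<r.
     if j = b \<and> a = (m - (i + j) mod m) mod m
     then c (i, j) * (-1) ^ j * lam ^ (j * (j + 1) div 2 + i * j) else 0)"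

definition hopf_ideal :: "nat \<Rightarrow> nat \<Rightarrow> 'k::field \<Rightarrow> (nat \<times> nat \<Rightarrow> 'k) set \<Rightarrow> bool" where
  "hopf_ideal m r lam I \<longleftrightarrow> I \<subseteq> Tcar m r \<and> (\<lambda>_. 0) \<in> I
     \<and> (\<forall>c\<in>I. \<forall>c'\<in>I. (\<lambda>p. c p + c' p) \<in> I)
     \<and> (\<forall>s. \<forall>c\<in>I. (\<lambda>p. s * c p) \<in> I)
     \<and> (\<forall>c\<in>I. \<forall>h\<in>Tcar m r. tmul m r lam c h \<in> I \<and> tmul m r lam h c \<in> I)
     \<and> (\<forall>c\<in>I. teps m c = 0)
     \<and> (\<forall>c\<in>I. tantipode m r lam c \<in> I)
     \<and> (\<forall>c\<in>I. \<exists>(N::nat) a b. (\<forall>k<N. a k \<in> Tcar m r \<and> b k \<in> Tcar m r \<and> (a k \<in> I \<or> b k \<in> I))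
            \<and> tcoprod m r lam c = (\<lambda>(p, q). \<Sum>k<N. a k p * b k q))"

definition tact :: "nat \<Rightarrow> nat \<Rightarrow> ((path \<Rightarrow> 'k::field) \<Rightarrow> (path \<Rightarrow> 'k)) \<Rightarrow> ((path \<Rightarrow> 'k) \<Rightarrow> (path \<Rightarrow> 'k))
     \<Rightarrow> (nat \<times> nat \<Rightarrow> 'k) \<Rightarrow> (path \<Rightarrow> 'k) \<Rightarrow> path \<Rightarrow> 'k" where
  "tact m r G X c a = (\<lambda>p. \<Sum>i<m. \<Sum>j<r. c (i, j) * (G ^^ i) ((X ^^ j) a) p)"

definition module_algebra :: "nat \<Rightarrow> nat \<Rightarrow> nat \<Rightarrow> 'k::field \<Rightarrow> ((path \<Rightarrow> 'k) \<Rightarrow> (path \<Rightarrow> 'k))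
     \<Rightarrow> ((path \<Rightarrow> 'k) \<Rightarrow> (path \<Rightarrow> 'k)) \<Rightarrow> bool" where
  "module_algebra n m r lam G X \<longleftrightarrow>
     (\<forall>a\<in>pathalg n. G a \<in> pathalg n \<and> X a \<in> pathalg n)
   \<and> (\<forall>a\<in>pathalg n. \<forall>b\<in>pathalg n. G (padd a b) = padd (G a) (G b) \<and> X (padd a b) = padd (X a) (X b))
   \<and> (\<forall>s. \<forall>a\<in>pathalg n. G (psmul s a) = psmul s (G a) \<and> X (psmul s a) = psmul s (X a))
   \<and> (\<forall>a\<in>pathalg n. (G ^^ m) a = a \<and> (X ^^ r) a = pzero \<and> G (X a) = psmul lam (X (G a)))
   \<and> (\<forall>a\<in>pathalg n. \<forall>b\<in>pathalg n. G (pmul n a b) = pmul n (G a) (G b)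
          \<and> X (pmul n a b) = padd (pmul n a (X b)) (pmul n (X a) (G b)))
   \<and> G (pone n) = pone n \<and> X (pone n) = pzero"

definition phi :: "nat \<Rightarrow> 'k::field \<Rightarrow> ((path \<Rightarrow> 'k) \<Rightarrow> (path \<Rightarrow> 'k)) \<Rightarrow> int \<Rightarrow> (path \<Rightarrow> 'k) \<Rightarrow> path \<Rightarrow> 'k" where
  "phi r lam G \<alpha> p = (\<lambda>q. \<Sum>i<r.
     (if \<alpha> \<ge> 0 then (inverse lam) ^ (nat \<alpha> * i) else lam ^ (nat (- \<alpha>) * i)) * (G ^^ i) p q)"

end

theory Submission
  imports Defs "HOL-Number_Theory.Cong"
begin


lemma pzero_pa: "pzero \<in> pathalg n"
  by (simp add: pathalg_def pzero_def)

lemma padd_pa: "a \<in> pathalg n \<Longrightarrow> b \<in> pathalg n \<Longrightarrow> padd a b \<in> pathalg n"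
  unfolding pathalg_def padd_def
proof (safe)
  assume "finite {p. a p \<noteq> 0}" "finite {p. b p \<noteq> 0}"
  then show "finite {p. a p + b p \<noteq> (0::'a)}"
    by (rule finite_subset[rotated, OF finite_UnI]) auto
next
  fix v w assume "\<forall>v w. a (v, w) \<noteq> 0 \<longrightarrow> v < n" "\<forall>v w. b (v, w) \<noteq> 0 \<longrightarrow> v < n"
    "a (v, w) + b (v, w) \<noteq> 0"
  then show "v < n" by (metis add.right_neutral add_0)
qed

lemma psmul_pa: "a \<in> pathalg n \<Longrightarrow> psmul c a \<in> pathalg n"
  unfolding pathalg_def psmul_def
  by (auto elim: finite_subset[rotated])

lemma psub_eq: "psub a b = padd a (psmul (-1) b)"
  by (simp add: psub_def padd_def psmul_def)

lemma psub_pa: "a \<in> pathalg n \<Longrightarrow> b \<in> pathalg n \<Longrightarrow> psub a b \<in> pathalg n"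
  by (simp add: psub_eq padd_pa psmul_pa)

lemma vtx_pa: "0 < n \<Longrightarrow> vtx n i \<in> pathalg n"
  unfolding pathalg_def vtx_def by auto

lemma arr_pa: "0 < n \<Longrightarrow> arr n i \<in> pathalg n"
  unfolding pathalg_def arr_def by auto

lemma arrs_pa: "0 < n \<Longrightarrow> arrs n i \<in> pathalg n"
  unfolding pathalg_def arrs_def by auto

lemma pmul_pa:
  assumes a: "a \<in> pathalg n" and b: "b \<in> pathalg n"
  shows "pmul n a b \<in> pathalg n"
proof -
  let ?Sa = "{p. a p \<noteq> 0}" and ?Sb = "{p. b p \<noteq> 0}"
  have fa: "finite ?Sa" and fb: "finite ?Sb" using a b by (auto simp: pathalg_def)
  have sub: "{p. pmul n a b p \<noteq> 0} \<subseteq> fst ` ?Sa \<times> ((\<lambda>(x, y). x @ y) ` (snd ` ?Sa \<times> snd ` ?Sb))"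
  proof
    fix p assume "p \<in> {p. pmul n a b p \<noteq> 0}"
    then obtain v w where p: "p = (v, w)" and nz: "pmul n a b (v, w) \<noteq> 0" by (cases p) auto
    then obtain k where "a (v, take k w) * b (tgt n v (take k w), drop k w) \<noteq> 0"
      unfolding pmul_def by (auto elim: sum.not_neutral_contains_not_neutral)
    then have 1: "(v, take k w) \<in> ?Sa" and 2: "(tgt n v (take k w), drop k w) \<in> ?Sb" by auto
    have "v \<in> fst ` ?Sa" using 1 by force
    moreover have "w \<in> (\<lambda>(x, y). x @ y) ` (snd ` ?Sa \<times> snd ` ?Sb)"
    proof -
      have "take k w \<in> snd ` ?Sa" using 1 by force
      moreover have "drop k w \<in> snd ` ?Sb" using 2 by force
      ultimately show ?thesis by (intro image_eqI[where x = "(take k w, drop k w)"]) auto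
    qed
    ultimately show "p \<in> fst ` ?Sa \<times> ((\<lambda>(x, y). x @ y) ` (snd ` ?Sa \<times> snd ` ?Sb))" using p by auto
  qed
  have fin: "finite {p. pmul n a b p \<noteq> 0}"
    by (rule finite_subset[OF sub]) (intro finite_cartesian_product finite_imageI fa fb)
  have "\<forall>v w. pmul n a b (v, w) \<noteq> 0 \<longrightarrow> v < n"
  proof (intro allI impI)
    fix v w assume "pmul n a b (v, w) \<noteq> 0"
    then obtain k where "a (v, take k w) * b (tgt n v (take k w), drop k w) \<noteq> 0"
      unfolding pmul_def by (auto elim: sum.not_neutral_contains_not_neutral)
    then show "v < n" using a by (auto simp: pathalg_def)
  qed
  then show ?thesis using fin by (simp add: pathalg_def)
qed

definition I0 :: "nat \<Rightarrow> (path \<Rightarrow> 'k::field) set" where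
  "I0 n = {f \<in> pathalg n. \<forall>v. f (v, []) = 0}"

lemma pmul_nil: "pmul n a b (v, []) = a (v, []) * b (v, [])"
  by (simp add: pmul_def tgt_def)

lemma I0_ideal: "0 < n \<Longrightarrow> is_ideal n (I0 n :: (path \<Rightarrow> 'k::field) set)"
  unfolding is_ideal_def I0_def
  using pzero_pa padd_pa psmul_pa pmul_pa
  by (auto simp: pmul_nil) (auto simp: pzero_def padd_def psmul_def)

lemma omega_I0: "0 < n \<Longrightarrow> (omega n i :: path \<Rightarrow> 'k::field) \<in> I0 n"
proof -
  assume n: "0 < n"
  have "omega n i \<in> pathalg n" unfolding omega_def
    by (intro psub_pa pmul_pa arr_pa arrs_pa n)
  moreover have "\<forall>v. (omega n i :: path \<Rightarrow> 'k) (v, []) = 0"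
    by (simp add: omega_def psub_def pmul_nil arrs_def arr_def)
  ultimately show ?thesis by (simp add: I0_def)
qed

lemma Omega_sub: "0 < n \<Longrightarrow> OmegaIdeal n \<subseteq> (I0 n :: (path \<Rightarrow> 'k::field) set)"
  unfolding OmegaIdeal_def using I0_ideal omega_I0 by (intro Inter_lower) auto

lemma Omega_nil: "0 < n \<Longrightarrow> f \<in> OmegaIdeal n \<Longrightarrow> f (v, []) = 0"
  using Omega_sub unfolding I0_def by blast

lemma pzero_Omega: "pzero \<in> OmegaIdeal n"
  unfolding OmegaIdeal_def is_ideal_def by auto

lemma lin_sum:
  assumes add: "\<forall>a\<in>pathalg n. \<forall>b\<in>pathalg n. F (padd a b) = padd (F a) (F b)"
    and sm: "\<forall>s. \<forall>a\<in>pathalg n. F (psmul s a) = psmul s (F a)"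
    and fin: "finite S" and mem: "\<forall>k\<in>S. f k \<in> pathalg n"
  shows "F (\<lambda>p. \<Sum>k\<in>S. c k * f k p) = (\<lambda>p. \<Sum>k\<in>S. c k * F (f k) p)
     \<and> (\<lambda>p. \<Sum>k\<in>S. c k * f k p) \<in> pathalg n"
  using fin mem
proof (induction S rule: finite_induct)
  case empty
  have "F pzero = F (psmul 0 pzero)" by (simp add: psmul_def pzero_def)
  also have "\<dots> = psmul 0 (F pzero)" using sm pzero_pa by blast
  finally show ?case by (simp add: psmul_def pzero_def pzero_pa[unfolded pzero_def])
next
  case (insert x S)
  have eq: "(\<lambda>p. \<Sum>k\<in>insert x S. c k * f k p) = padd (psmul (c x) (f x)) (\<lambda>p. \<Sum>k\<in>S. c k * f k p)"
    using insert by (simp add: padd_def psmul_def)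
  have fx: "f x \<in> pathalg n" using insert by auto
  have IH: "F (\<lambda>p. \<Sum>k\<in>S. c k * f k p) = (\<lambda>p. \<Sum>k\<in>S. c k * F (f k) p)"
     "(\<lambda>p. \<Sum>k\<in>S. c k * f k p) \<in> pathalg n" using insert by auto
  have "F (padd (psmul (c x) (f x)) (\<lambda>p. \<Sum>k\<in>S. c k * f k p)) = padd (psmul (c x) (F (f x))) (\<lambda>p. \<Sum>k\<in>S. c k * F (f k) p)"
  proof -
    have 1: "psmul (c x) (f x) \<in> pathalg n" using fx psmul_pa by blast
    show ?thesis using add sm fx IH 1 by simp
  qed
  moreover have "padd (psmul (c x) (f x)) (\<lambda>p. \<Sum>k\<in>S. c k * f k p) \<in> pathalg n"
    using IH fx psmul_pa padd_pa by blast
  ultimately show ?case unfolding eq using insert(1,2) by (simp add: padd_def psmul_def)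
qed



lemma vtx_cong: "a mod n = b mod n \<Longrightarrow> vtx n a = vtx n b"
  by (simp add: vtx_def)

lemma vtx_app: "vtx n j (v, w) = (if v = j mod n \<and> w = [] then 1 else 0)"
  by (simp add: vtx_def)

lemma funpow_fix: "F a = a \<Longrightarrow> (F ^^ k) a = a"
  by (induction k) auto

lemma sumdelta: "k0 < (r::nat) \<Longrightarrow> (\<Sum>k<r. if P \<and> k = k0 then (1::'k::field) else 0) = (if P then 1 else 0)"
  by (cases P) simp_all

lemma sumdelta2: "(j::nat) < t \<Longrightarrow> (\<Sum>i<t. c i * (if i = j then (1::'k::field) else 0)) = c j"
proof -
  assume j: "j < t"
  have "(\<Sum>i<t. c i * (if i = j then (1::'k) else 0)) = (\<Sum>i<t. if i = j then c j else 0)"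
    by (rule sum.cong) auto
  then show ?thesis using j by simp
qed

lemma dsum: "1 < (m::nat) \<Longrightarrow> 0 < (r::nat) \<Longrightarrow>
  (\<Sum>i<m. \<Sum>j<r. (if (i, j) = (1::nat, 0::nat) then 1 else 0) * F i j) = (F 1 0 :: 'k::field)"
proof -
  assume m: "1 < m" and r: "0 < r"
  have "\<And>i. (\<Sum>j<r. (if (i, j) = (1::nat, 0::nat) then 1 else 0) * F i j) = (if i = 1 then F 1 0 else (0::'k))"
  proof -
    fix i
    have "(\<Sum>j<r. (if (i, j) = (1::nat, 0::nat) then 1 else 0) * F i j) = (\<Sum>j<r. if j = 0 then (if i = 1 then F 1 0 else (0::'k)) else 0)"
      by (rule sum.cong) auto
    then show "?thesis i" using r by simp
  qed
  then show ?thesis using m by simp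
qed

theorem lemma4p2:
  fixes lam :: "'k::field" and r m n d :: nat
    and \<mu> \<mu>s \<gamma> :: "nat \<Rightarrow> 'k"
    and G X :: "(path \<Rightarrow> 'k) \<Rightarrow> (path \<Rightarrow> 'k)"
  assumes r_gt: "1 < r" and r_dvd: "r dvd m" and rm: "r = m"
    and prim: "lam ^ r = 1" "\<forall>k. 0 < k \<and> k < r \<longrightarrow> lam ^ k \<noteq> 1"
    and char: "(of_nat r :: 'k) \<noteq> 0"
    and n3: "3 \<le> n" and d_pos: "0 < d" and d_le: "d \<le> n - 1"
    and units: "\<forall>i<n. \<mu> i \<noteq> 0 \<and> \<mu>s i \<noteq> 0 \<and> \<gamma> i \<noteq> 0"
    and modalg: "module_algebra n m r lam G X"
    and g_e: "\<forall>i<n. G (vtx n i) = vtx n (i + d)"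
    and g_a: "\<forall>i<n. G (arr n i) = psmul (\<mu> i) (arr n (i + d))"
    and g_as: "\<forall>i<n. G (arrs n i) = psmul (\<mu>s i) (arrs n (i + d))"
    and x_e: "\<forall>i<n. X (vtx n i) = psmul (\<gamma> i) (psub (vtx n i) (psmul (inverse lam) (vtx n (i + d))))"
    and x_a: "\<forall>i<n. X (arr n i) =
               psub (psmul (\<gamma> ((i + 1) mod n)) (arr n i)) (psmul (\<gamma> i * inverse lam) (G (arr n i)))"
    and x_as: "\<forall>i<n. X (arrs n i) =
               psub (psmul (\<gamma> i) (arrs n i)) (psmul (\<gamma> ((i + 1) mod n) * inverse lam) (G (arrs n i)))"
    and inner_faithful_path: "\<forall>I. hopf_ideal m r lam I \<and> (\<forall>c\<in>I. \<forall>a\<in>pathalg n. tact m r G X c a = pzero)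
               \<longrightarrow> I \<subseteq> {\<lambda>_. 0}"
    and descends: "\<forall>a\<in>OmegaIdeal n. G a \<in> OmegaIdeal n \<and> X a \<in> OmegaIdeal n"
    and inner_faithful_Pi: "\<forall>I. hopf_ideal m r lam I \<and> (\<forall>c\<in>I. \<forall>a\<in>pathalg n. tact m r G X c a \<in> OmegaIdeal n)
               \<longrightarrow> I \<subseteq> {\<lambda>_. 0}"
  shows "(\<forall>i < gcd n d. (\<forall>c\<in>Tcar m r.
              psub (tact m r G X c (phi r lam G 0 (vtx n i))) (psmul (teps m c) (phi r lam G 0 (vtx n i)))
                \<in> OmegaIdeal n))
       \<and> (\<forall>c :: nat \<Rightarrow> 'k. (\<lambda>p. \<Sum>i < gcd n d. c i * phi r lam G 0 (vtx n i) p) \<in> OmegaIdeal n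
              \<longrightarrow> (\<forall>i < gcd n d. c i = 0))
       \<and> (\<forall>a\<in>pathalg n. (\<forall>v w. a (v, w) \<noteq> 0 \<longrightarrow> w = [])
              \<longrightarrow> (\<forall>c\<in>Tcar m r. psub (tact m r G X c a) (psmul (teps m c) a) \<in> OmegaIdeal n)
              \<longrightarrow> (\<exists>c :: nat \<Rightarrow> 'k. psub a (\<lambda>p. \<Sum>i < gcd n d. c i * phi r lam G 0 (vtx n i) p)
                      \<in> OmegaIdeal n))"
proof -
  have n0: "0 < n" using n3 by simp
  have dn: "d < n" using d_le n3 by simp
  have lam0: "lam \<noteq> 0" using prim(1) r_gt by (metis one_neq_zero zero_power less_trans zero_less_one)
  have Gpa: "\<And>a. a \<in> pathalg n \<Longrightarrow> G a \<in> pathalg n"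
   and Xpa: "\<And>a. a \<in> pathalg n \<Longrightarrow> X a \<in> pathalg n"
   and Gadd: "\<forall>a\<in>pathalg n. \<forall>b\<in>pathalg n. G (padd a b) = padd (G a) (G b)"
   and Xadd: "\<forall>a\<in>pathalg n. \<forall>b\<in>pathalg n. X (padd a b) = padd (X a) (X b)"
   and Gsm: "\<forall>s. \<forall>a\<in>pathalg n. G (psmul s a) = psmul s (G a)"
   and Xsm: "\<forall>s. \<forall>a\<in>pathalg n. X (psmul s a) = psmul s (X a)"
   and Gm: "\<And>a. a \<in> pathalg n \<Longrightarrow> (G ^^ m) a = a"
   and gx: "\<And>a. a \<in> pathalg n \<Longrightarrow> G (X a) = psmul lam (X (G a))"
    using modalg unfolding module_algebra_def by blast+
  have vpa: "\<And>j. vtx n j \<in> pathalg n" using vtx_pa n0 by blast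
  have G0: "G pzero = pzero" and X0: "X pzero = pzero"
    using lin_sum[OF Gadd Gsm, of "{}"] lin_sum[OF Xadd Xsm, of "{}"] by (simp_all add: pzero_def)
  have Gv: "\<And>j. G (vtx n j) = vtx n (j + d)"
  proof -
    fix j
    have "G (vtx n j) = G (vtx n (j mod n))" by (simp add: vtx_def)
    also have "\<dots> = vtx n (j mod n + d)" using g_e n0 by simp
    also have "\<dots> = vtx n (j + d)" by (rule vtx_cong) (simp add: mod_add_left_eq)
    finally show "G (vtx n j) = vtx n (j + d)" .
  qed
  have Gpow: "\<And>k j. (G ^^ k) (vtx n j) = vtx n (j + k * d)"
  proof -
    fix k j show "(G ^^ k) (vtx n j) = vtx n (j + k * d)"
      by (induction k) (simp_all add: Gv algebra_simps)
  qed
  have ndvd: "n dvd r * d"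
  proof -
    have "vtx n (r * d) = (vtx n 0 :: path \<Rightarrow> 'k)" using Gm[OF vpa, of 0] Gpow[of m 0] rm by simp
    then have "vtx n (r * d) (0, []) = (vtx n 0 (0, []) :: 'k)" by simp
    then have "(r * d) mod n = 0" by (simp add: vtx_app split: if_splits)
    then show ?thesis by auto
  qed
  have Xv: "\<And>j q. X (vtx n j) q = \<gamma> (j mod n) * vtx n j q - \<gamma> (j mod n) * inverse lam * vtx n (j + d) q"
  proof -
    fix j q
    have e1: "vtx n j = vtx n (j mod n)" by (simp add: vtx_def)
    have e2: "vtx n (j + d) = vtx n (j mod n + d)" by (rule vtx_cong) (simp add: mod_add_left_eq)
    show "X (vtx n j) q = \<gamma> (j mod n) * vtx n j q - \<gamma> (j mod n) * inverse lam * vtx n (j + d) q"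
    proof -
      have "X (vtx n j) = X (vtx n (j mod n))" using e1 by (rule arg_cong)
      also have "\<dots> = psmul (\<gamma> (j mod n)) (psub (vtx n (j mod n)) (psmul (inverse lam) (vtx n (j mod n + d))))"
        using x_e n0 by simp
      finally have "X (vtx n j) = (\<lambda>p. \<gamma> (j mod n) * (vtx n j p - inverse lam * vtx n (j + d) p))" by (simp add: psmul_def psub_def e1[symmetric] e2[symmetric])
      then show ?thesis by (simp add: algebra_simps)
    qed
  qed
  have gam: "\<And>j. j < n \<Longrightarrow> \<gamma> j = lam * \<gamma> ((j + d) mod n)"
  proof -
    fix j assume j: "j < n"
    have neq: "(j + d + d) mod n \<noteq> (j + d) mod n"
    proof
      assume "(j + d + d) mod n = (j + d) mod n"
      then have "[j + d + d = j + d + 0] (mod n)" by (simp add: cong_def)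
      then have "[d = 0] (mod n)" using cong_add_lcancel_nat by blast
      then show False using d_pos dn by (simp add: cong_def)
    qed
    have "G (X (vtx n j)) = psmul lam (X (G (vtx n j)))" using gx[OF vpa] .
    then have "G (X (vtx n j)) ((j + d) mod n, []) = lam * X (vtx n (j + d)) ((j + d) mod n, [])"
      by (simp add: Gv psmul_def)
    moreover have "X (vtx n (j + d)) ((j + d) mod n, []) = \<gamma> ((j + d) mod n)"
      using neq by (simp add: Xv vtx_app)
    moreover have "G (X (vtx n j)) = psmul (\<gamma> j) (psub (vtx n (j + d)) (psmul (inverse lam) (vtx n (j + d + d))))"
    proof -
      have xe: "X (vtx n j) = padd (psmul (\<gamma> j) (vtx n j)) (psmul (- (\<gamma> j * inverse lam)) (vtx n (j + d)))"
        using x_e j by (auto simp: psmul_def psub_def padd_def algebra_simps)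
      then have "G (X (vtx n j)) = padd (psmul (\<gamma> j) (vtx n (j + d))) (psmul (- (\<gamma> j * inverse lam)) (vtx n (j + d + d)))"
      proof -
        have p1: "psmul (\<gamma> j) (vtx n j) \<in> pathalg n" and p2: "psmul (- (\<gamma> j * inverse lam)) (vtx n (j + d)) \<in> pathalg n"
          using vpa psmul_pa by blast+
        show ?thesis using Gadd p1 p2 by (simp add: xe Gv add.assoc Gsm[rule_format, OF vpa])
      qed
      then show ?thesis by (simp add: psmul_def psub_def padd_def algebra_simps)
    qed
    moreover have "vtx n (j + d) ((j + d) mod n, []) = (1::'k)" by (simp add: vtx_app)
    ultimately show "\<gamma> j = lam * \<gamma> ((j + d) mod n)" using neq by (simp add: psmul_def psub_def vtx_app)
  qed
  have gamk: "\<And>k j. j < n \<Longrightarrow> \<gamma> j = lam ^ k * \<gamma> ((j + k * d) mod n)"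
  proof -
    fix k j assume j: "j < n"
    show "\<gamma> j = lam ^ k * \<gamma> ((j + k * d) mod n)"
    proof (induction k)
      case 0 then show ?case using j by simp
    next
      case (Suc k)
      have "(j + Suc k * d) mod n = ((j + k * d) mod n + d) mod n"
      proof - have "j + Suc k * d = (j + k * d) + d" by simp then show ?thesis by (metis mod_add_left_eq) qed
      then have "\<gamma> ((j + k * d) mod n) = lam * \<gamma> ((j + Suc k * d) mod n)"
        using gam[of "(j + k * d) mod n"] n0 by simp
      then show ?case using Suc by simp
    qed
  qed
  have nodvd: "\<And>k. 0 < k \<Longrightarrow> k < r \<Longrightarrow> \<not> n dvd k * d"
  proof
    fix k assume k: "0 < k" "k < r" and dv: "n dvd k * d"
    have "\<gamma> 0 = lam ^ k * \<gamma> 0" using gamk[of 0 k] n0 dv by simp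
    moreover have "\<gamma> 0 \<noteq> 0" using units n0 by blast
    ultimately have "lam ^ k = 1" by simp
    then show False using prim(2) k by blast
  qed
  define \<tau> where "\<tau> = gcd n d"
  have tau0: "0 < \<tau>" using n0 by (simp add: \<tau>_def)
  have tn: "\<tau> dvd n" and td: "\<tau> dvd d" by (simp_all add: \<tau>_def)
  have ntr: "n = \<tau> * r"
  proof -
    define s where "s = n div \<tau>"
    define d' where "d' = d div \<tau>"
    have ns: "n = \<tau> * s" and dd: "d = \<tau> * d'" using tn td by (simp_all add: s_def d'_def)
    have cop: "coprime s d'" unfolding s_def d'_def \<tau>_def
      using div_gcd_coprime n0 by (metis gr_implies_not0)
    have "s dvd r * d'" using ndvd tau0 by (simp add: ns dd)
    then have sr: "s dvd r" using cop by (simp add: coprime_dvd_mult_left_iff)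
    have s0: "0 < s" using ns n0 by (simp add: gr0I)
    have "n dvd s * d" by (simp add: ns dd)
    then have "\<not> s < r" using nodvd s0 by blast
    moreover have "s \<le> r" using sr r_gt by (simp add: dvd_imp_le)
    ultimately show ?thesis using ns by simp
  qed
  have injf: "\<And>i i' k k'. i < \<tau> \<Longrightarrow> i' < \<tau> \<Longrightarrow> k < r \<Longrightarrow> k' < r \<Longrightarrow>
      (i + k * d) mod n = (i' + k' * d) mod n \<Longrightarrow> i = i' \<and> k = k'"
  proof -
    fix i i' k k' assume i: "i < \<tau>" and i': "i' < \<tau>" and k: "k < r" and k': "k' < r"
      and eq: "(i + k * d) mod n = (i' + k' * d) mod n"
    have "(i + k * d) mod \<tau> = (i' + k' * d) mod \<tau>" using eq tn by (metis mod_mod_cancel)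
    moreover obtain e where e: "d = \<tau> * e" using td by blast
    moreover have "(i + k * d) mod \<tau> = i mod \<tau>"
    proof - have "i + k * d = i + \<tau> * (k * e)" using e by simp then show ?thesis by (metis mod_mult_self2) qed
    moreover have "(i' + k' * d) mod \<tau> = i' mod \<tau>"
    proof - have "i' + k' * d = i' + \<tau> * (k' * e)" using e by simp then show ?thesis by (metis mod_mult_self2) qed
    ultimately have "i mod \<tau> = i' mod \<tau>" by simp
    then have ii: "i = i'" using i i' by simp
    have cg: "[k * d = k' * d] (mod n)" using eq ii cong_add_lcancel_nat unfolding cong_def by blast
    have "k = k'"
    proof (cases "k \<le> k'")
      case True
      then have le: "k * d \<le> k' * d" by simp
      have "n dvd k' * d - k * d" using mod_eq_dvd_iff_nat[OF le] cg[unfolded cong_def, symmetric] by simp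
      then have "n dvd (k' - k) * d" by (simp add: diff_mult_distrib)
      then have "\<not> (0 < k' - k)" using nodvd k' by (meson diff_le_self le_less_trans)
      then show ?thesis using True by simp
    next
      case False
      then have le: "k' * d \<le> k * d" by simp
      have "n dvd k * d - k' * d" using mod_eq_dvd_iff_nat[OF le] cg[unfolded cong_def] by simp
      then have "n dvd (k - k') * d" by (simp add: diff_mult_distrib)
      then have "\<not> (0 < k - k')" using nodvd k by (meson diff_le_self le_less_trans)
      then show ?thesis using False by simp
    qed
    then show "i = i' \<and> k = k'" using ii by simp
  qed
  have surjf: "\<And>v. v < n \<Longrightarrow> \<exists>i k. i < \<tau> \<and> k < r \<and> (i + k * d) mod n = v"
  proof -
    fix v assume v: "v < n"
    let ?f = "\<lambda>(i, k). (i + k * d) mod n"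
    have inj: "inj_on ?f ({..<\<tau>} \<times> {..<r})"
      unfolding inj_on_def using injf by auto
    have cardn: "card (?f ` ({..<\<tau>} \<times> {..<r})) = card {..<n}"
      using card_image[OF inj] ntr by (simp add: card_cartesian_product)
    have sub: "?f ` ({..<\<tau>} \<times> {..<r}) \<subseteq> {..<n}" using n0 by auto
    have "?f ` ({..<\<tau>} \<times> {..<r}) = {..<n}"
      by (rule card_subset_eq[OF finite_lessThan sub cardn])
    then have "v \<in> ?f ` ({..<\<tau>} \<times> {..<r})" using v by simp
    then show "\<exists>i k. i < \<tau> \<and> k < r \<and> (i + k * d) mod n = v" by auto
  qed
  have tau_n: "\<tau> < n" using ntr r_gt tau0 by simp
  have phi_eq: "\<And>i. phi r lam G 0 (vtx n i) = (\<lambda>q. \<Sum>k<r. vtx n (i + k * d) q)"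
    by (simp add: phi_def Gpow)
  have phiG: "\<And>i. G (\<lambda>q. \<Sum>k<r. vtx n (i + k * d) q) = (\<lambda>q. \<Sum>k<r. vtx n (i + k * d) q)"
   and phiX: "\<And>i. X (\<lambda>q. \<Sum>k<r. vtx n (i + k * d) q) = pzero"
   and phipa: "\<And>i. (\<lambda>q. \<Sum>k<r. vtx n (i + k * d) q :: 'k) \<in> pathalg n"
  proof -
    fix i
    have L1: "G (\<lambda>q. \<Sum>k<r. vtx n (i + k * d) q) = (\<lambda>q. \<Sum>k<r. G (vtx n (i + k * d)) q)
        \<and> (\<lambda>q. \<Sum>k<r. vtx n (i + k * d) q :: 'k) \<in> pathalg n"
      using lin_sum[OF Gadd Gsm, of "{..<r}" "\<lambda>k. vtx n (i + k * d)" "\<lambda>_. 1"] by (simp add: vpa)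
    then have LG: "G (\<lambda>q. \<Sum>k<r. vtx n (i + k * d) q) = (\<lambda>q. \<Sum>k<r. G (vtx n (i + k * d)) q)"
      and LP: "(\<lambda>q. \<Sum>k<r. vtx n (i + k * d) q :: 'k) \<in> pathalg n" by auto
    have LX: "X (\<lambda>q. \<Sum>k<r. vtx n (i + k * d) q) = (\<lambda>q. \<Sum>k<r. X (vtx n (i + k * d)) q)"
      using lin_sum[OF Xadd Xsm, of "{..<r}" "\<lambda>k. vtx n (i + k * d)" "\<lambda>_. 1"] by (simp add: vpa)
    show "(\<lambda>q. \<Sum>k<r. vtx n (i + k * d) q :: 'k) \<in> pathalg n" using LP .
    have modeq: "(i + r * d) mod n = i mod n"
    proof -
      obtain e where "r * d = n * e" using ndvd by blast
      then show ?thesis by simp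
    qed
    have wrap: "vtx n (i + r * d) = (vtx n i :: path \<Rightarrow> 'k)" by (rule vtx_cong) (rule modeq)
    have sucd: "\<And>k. i + k * d + d = i + Suc k * d" by simp
    show "G (\<lambda>q. \<Sum>k<r. vtx n (i + k * d) q) = (\<lambda>q. \<Sum>k<r. vtx n (i + k * d) q)"
    proof
      fix q
      define f where "f k = (vtx n (i + k * d) q :: 'k)" for k
      have "(\<Sum>k<r. f (Suc k)) + f 0 = (\<Sum>k<r. f k) + f r"
        using sum.lessThan_Suc_shift[of f r] sum.lessThan_Suc[of f r] by simp
      moreover have "f r = f 0" using wrap by (simp add: f_def)
      ultimately have fs: "(\<Sum>k<r. f (Suc k)) = (\<Sum>k<r. f k)" by simp
      have "\<And>k. G (vtx n (i + k * d)) q = f (Suc k)"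
        by (simp only: Gv sucd f_def)
      then show "G (\<lambda>q. \<Sum>k<r. vtx n (i + k * d) q) q = (\<Sum>k<r. vtx n (i + k * d) q)"
        using LG fs by (simp add: f_def)
    qed
    show "X (\<lambda>q. \<Sum>k<r. vtx n (i + k * d) q) = pzero"
    proof
      fix q
      define E where "E k = \<gamma> ((i + k * d) mod n) * vtx n (i + k * d) q" for k
      have step: "X (vtx n (i + k * d)) q = E k - E (Suc k)" for k
      proof -
        let ?j = "(i + k * d) mod n"
        have "\<gamma> ?j = lam * \<gamma> ((?j + d) mod n)" by (rule gam) (simp add: n0)
        moreover have "(?j + d) mod n = (i + Suc k * d) mod n"
          using sucd[of k] by (metis mod_add_left_eq)
        ultimately have gq: "\<gamma> ((i + k * d) mod n) * inverse lam = \<gamma> ((i + Suc k * d) mod n)" using lam0 by simp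
        show ?thesis by (simp only: Xv E_def gq sucd)
      qed
      have "E r = E 0" using wrap modeq by (simp add: E_def)
      then show "X (\<lambda>q. \<Sum>k<r. vtx n (i + k * d) q) q = pzero q"
        using LX by (simp add: step sum_lessThan_telescope' pzero_def)
    qed
  qed
  have Gz: "\<And>a. (G ^^ a) pzero = pzero" by (rule funpow_fix[where F=G, OF G0])
  have part1: "\<forall>i < gcd n d. (\<forall>c\<in>Tcar m r.
              psub (tact m r G X c (phi r lam G 0 (vtx n i))) (psmul (teps m c) (phi r lam G 0 (vtx n i)))
                \<in> OmegaIdeal n)"
  proof (intro allI impI ballI)
    fix i and c :: "nat \<times> nat \<Rightarrow> 'k" assume i: "i < gcd n d" and c: "c \<in> Tcar m r"
    define P where "P = (\<lambda>q. \<Sum>k<r. vtx n (i + k * d) q :: 'k)"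
    have Pphi: "phi r lam G 0 (vtx n i) = P" using phi_eq P_def by simp
    have GP: "\<And>a. (G ^^ a) P = P" unfolding P_def by (rule funpow_fix[where F=G, OF phiG])
    have XP: "\<And>j. (X ^^ Suc j) P = pzero"
    proof -
      fix j show "(X ^^ Suc j) P = pzero"
        by (induction j) (simp_all add: P_def phiX X0)
    qed
    have XP2: "\<And>j. X ((X ^^ j) P) = pzero" using XP by simp
    have Gz2: "\<And>a p. (G ^^ a) pzero p = 0" using Gz by (simp add: pzero_def)
    have inner: "(\<Sum>j<r. c (a, j) * (G ^^ a) ((X ^^ j) P) p) = c (a, 0) * P p" for a p
    proof -
      have "(\<Sum>j<r. c (a, j) * (G ^^ a) ((X ^^ j) P) p) = (\<Sum>j<r. if j = 0 then c (a, 0) * P p else 0)"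
      proof (rule sum.cong)
        fix j show "c (a, j) * (G ^^ a) ((X ^^ j) P) p = (if j = 0 then c (a, 0) * P p else 0)"
          by (cases j) (auto simp: GP XP2 Gz2)
      qed simp
      then show ?thesis using r_gt by simp
    qed
    have "tact m r G X c P = psmul (teps m c) P"
      by (simp add: tact_def inner teps_def psmul_def sum_distrib_right)
    then show "psub (tact m r G X c (phi r lam G 0 (vtx n i))) (psmul (teps m c) (phi r lam G 0 (vtx n i)))
                \<in> OmegaIdeal n"
      using pzero_Omega by (simp add: Pphi psub_def pzero_def)
  qed
  have pv: "\<And>i v. phi r lam G 0 (vtx n i) (v, []) = (\<Sum>k<r. if v = (i + k * d) mod n then 1 else 0)"
    by (simp add: phi_eq vtx_app)
  have part2: "\<forall>c :: nat \<Rightarrow> 'k. (\<lambda>p. \<Sum>i < gcd n d. c i * phi r lam G 0 (vtx n i) p) \<in> OmegaIdeal n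
              \<longrightarrow> (\<forall>i < gcd n d. c i = 0)"
  proof (intro allI impI)
    fix c :: "nat \<Rightarrow> 'k" and j
    assume h: "(\<lambda>p. \<Sum>i < gcd n d. c i * phi r lam G 0 (vtx n i) p) \<in> OmegaIdeal n" and j: "j < gcd n d"
    have z: "(\<Sum>i < \<tau>. c i * phi r lam G 0 (vtx n i) (j, [])) = 0"
      using Omega_nil[OF n0 h, of j] by (simp add: \<tau>_def)
    have jt: "j < \<tau>" using j by (simp add: \<tau>_def)
    have "\<And>i. i < \<tau> \<Longrightarrow> phi r lam G 0 (vtx n i) (j, []) = (if i = j then 1 else 0)"
    proof -
      fix i assume it: "i < \<tau>"
      have "\<And>k. k < r \<Longrightarrow> (j = (i + k * d) mod n) = (i = j \<and> k = 0)"
      proof -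
        fix k assume kr: "k < r"
        show "(j = (i + k * d) mod n) = (i = j \<and> k = 0)"
        proof
          assume e: "j = (i + k * d) mod n"
          have "(j + 0 * d) mod n = j" using jt tau_n by simp
          then have "(i + k * d) mod n = (j + 0 * d) mod n" using e by simp
          then show "i = j \<and> k = 0" using injf[OF it jt kr, of 0] r_gt by simp
        next
          assume "i = j \<and> k = 0" then show "j = (i + k * d) mod n" using jt tau_n by simp
        qed
      qed
      then have "phi r lam G 0 (vtx n i) (j, []) = (\<Sum>k<r. if i = j \<and> k = 0 then 1 else 0)"
        unfolding pv by (intro sum.cong) auto
      also have "\<dots> = (if i = j then 1 else 0)" using r_gt by (intro sumdelta) simp
      finally show "phi r lam G 0 (vtx n i) (j, []) = (if i = j then 1 else 0)" .
    qed
    then have "(\<Sum>i < \<tau>. c i * phi r lam G 0 (vtx n i) (j, [])) = (\<Sum>i < \<tau>. c i * (if i = j then 1 else 0))"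
      by (intro sum.cong) auto
    also have "\<dots> = c j" using jt by (rule sumdelta2)
    finally show "c j = 0" using z by simp
  qed
  have part3: "\<forall>a\<in>pathalg n. (\<forall>v w. a (v, w) \<noteq> 0 \<longrightarrow> w = [])
              \<longrightarrow> (\<forall>c\<in>Tcar m r. psub (tact m r G X c a) (psmul (teps m c) a) \<in> OmegaIdeal n)
              \<longrightarrow> (\<exists>c :: nat \<Rightarrow> 'k. psub a (\<lambda>p. \<Sum>i < gcd n d. c i * phi r lam G 0 (vtx n i) p)
                      \<in> OmegaIdeal n)"
  proof (intro ballI impI)
    fix a :: "path \<Rightarrow> 'k"
    assume apa: "a \<in> pathalg n" and supp: "\<forall>v w. a (v, w) \<noteq> 0 \<longrightarrow> w = []"
      and inv: "\<forall>c\<in>Tcar m r. psub (tact m r G X c a) (psmul (teps m c) a) \<in> OmegaIdeal n"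
    define cc :: "nat \<times> nat \<Rightarrow> 'k" where "cc = (\<lambda>ij. if ij = (1, 0) then 1 else 0)"
    have ccT: "cc \<in> Tcar m r" using r_gt rm by (auto simp: Tcar_def cc_def split: if_splits)
    have tc: "tact m r G X cc a = G a"
    proof
      fix p
      have "tact m r G X cc a p = (\<Sum>i<m. \<Sum>j<r. (if (i, j) = (1::nat, 0::nat) then 1 else 0) * (G ^^ i) ((X ^^ j) a) p)"
        by (simp add: tact_def cc_def)
      also have "\<dots> = (G ^^ 1) ((X ^^ 0) a) p"
        by (rule dsum[where F = "\<lambda>i j. (G ^^ i) ((X ^^ j) a) p"]) (use r_gt rm in auto)
      finally show "tact m r G X cc a p = G a p" by simp
    qed
    have te: "teps m cc = 1"
    proof -
      have "teps m cc = (\<Sum>i<m. if i = 1 then 1 else 0)" by (simp add: teps_def cc_def)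
      then show ?thesis using r_gt rm by simp
    qed
    have Gfix: "\<And>v. G a (v, []) = a (v, [])"
    proof -
      fix v
      have "psub (G a) (psmul 1 a) \<in> OmegaIdeal n" using inv ccT tc te by force
      from Omega_nil[OF n0 this, of v] show "G a (v, []) = a (v, [])" by (simp add: psub_def psmul_def)
    qed
    have anil: "\<And>v w. w \<noteq> [] \<Longrightarrow> a (v, w) = 0" using supp by blast
    have abig: "\<And>v w. n \<le> v \<Longrightarrow> a (v, w) = 0" using apa by (force simp: pathalg_def)
    have aexp: "a = (\<lambda>p. \<Sum>v<n. a (v, []) * vtx n v p)"
    proof
      fix p show "a p = (\<Sum>v<n. a (v, []) * vtx n v p)"
      proof (cases p)
        case (Pair u w)
        show ?thesis
        proof (cases "w = [] \<and> u < n")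
          case True
          have "(\<Sum>v<n. a (v, []) * vtx n v p) = (\<Sum>v<n. if v = u then a (u, []) else 0)"
            by (rule sum.cong) (auto simp: Pair True vtx_app)
          then show ?thesis using True Pair by simp
        next
          case False
          have "(\<Sum>v<n. a (v, []) * vtx n v p) = (\<Sum>v<n. 0)"
            by (rule sum.cong) (use False in \<open>auto simp: Pair vtx_app\<close>)
          moreover have "a p = 0" using False Pair anil abig by (cases "w = []") auto
          ultimately show ?thesis by simp
        qed
      qed
    qed
    have Ga: "G a = (\<lambda>p. \<Sum>v<n. a (v, []) * vtx n (v + d) p)"
    proof -
      have "G (\<lambda>p. \<Sum>v<n. a (v, []) * vtx n v p) = (\<lambda>p. \<Sum>v<n. a (v, []) * G (vtx n v) p)"
        using lin_sum[OF Gadd Gsm, of "{..<n}" "\<lambda>v. vtx n v" "\<lambda>v. a (v, [])"] by (simp add: vpa)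
      then show ?thesis using aexp by (simp add: Gv)
    qed
    have ainv: "\<And>u. u < n \<Longrightarrow> a ((u + d) mod n, []) = a (u, [])"
    proof -
      fix u assume u: "u < n"
      have "G a ((u + d) mod n, []) = (\<Sum>v<n. if v = u then a (u, []) else 0)"
      proof -
        have "\<And>v. v < n \<Longrightarrow> ((u + d) mod n = (v + d) mod n) = (v = u)"
        proof -
          fix v assume v: "v < n"
          show "((u + d) mod n = (v + d) mod n) = (v = u)"
          proof
            assume "(u + d) mod n = (v + d) mod n"
            then have "[u + d = v + d] (mod n)" by (simp add: cong_def)
            then have "[u = v] (mod n)" using cong_add_rcancel_nat by blast
            then show "v = u" using u v by (simp add: cong_def)
          qed simp
        qed
        then show ?thesis unfolding Ga by (intro sum.cong) (auto simp: vtx_app)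
      qed
      then show "a ((u + d) mod n, []) = a (u, [])" using Gfix u by simp
    qed
    have ainvk: "\<And>k i. i < n \<Longrightarrow> a ((i + k * d) mod n, []) = a (i, [])"
    proof -
      fix k i assume i: "i < n"
      show "a ((i + k * d) mod n, []) = a (i, [])"
      proof (induction k)
        case 0 then show ?case using i by simp
      next
        case (Suc k)
        have "(i + Suc k * d) mod n = ((i + k * d) mod n + d) mod n"
        proof - have "i + Suc k * d = (i + k * d) + d" by simp then show ?thesis by (metis mod_add_left_eq) qed
        then show ?case using ainv[of "(i + k * d) mod n"] n0 Suc by simp
      qed
    qed
    define cf where "cf i = a (i, [])" for i
    have aeq: "a = (\<lambda>p. \<Sum>i < gcd n d. cf i * phi r lam G 0 (vtx n i) p)"
    proof
      fix p show "a p = (\<Sum>i < gcd n d. cf i * phi r lam G 0 (vtx n i) p)"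
      proof (cases p)
        case (Pair u w)
        show ?thesis
        proof (cases "w = [] \<and> u < n")
          case True
          obtain i0 k0 where i0: "i0 < \<tau>" and k0: "k0 < r" and e0: "(i0 + k0 * d) mod n = u"
            using surjf True by blast
          have ph: "\<And>i. i < \<tau> \<Longrightarrow> phi r lam G 0 (vtx n i) p = (if i = i0 then 1 else 0)"
          proof -
            fix i assume it: "i < \<tau>"
            have "\<And>k. k < r \<Longrightarrow> (u = (i + k * d) mod n) = (i = i0 \<and> k = k0)"
            proof -
              fix k assume kr: "k < r"
              show "(u = (i + k * d) mod n) = (i = i0 \<and> k = k0)"
              proof
                assume "u = (i + k * d) mod n"
                then show "i = i0 \<and> k = k0" using injf[OF it i0 kr k0] e0 by simp
              next
                assume "i = i0 \<and> k = k0" then show "u = (i + k * d) mod n" using e0 by simp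
              qed
            qed
            then have "phi r lam G 0 (vtx n i) p = (\<Sum>k<r. if i = i0 \<and> k = k0 then 1 else 0)"
              unfolding Pair using True pv by (simp only:) (intro sum.cong, auto)
            also have "\<dots> = (if i = i0 then 1 else 0)" using k0 by (rule sumdelta)
            finally show "phi r lam G 0 (vtx n i) p = (if i = i0 then 1 else 0)" .
          qed
          have "(\<Sum>i < gcd n d. cf i * phi r lam G 0 (vtx n i) p) = (\<Sum>i < \<tau>. cf i * (if i = i0 then 1 else 0))"
            unfolding \<tau>_def[symmetric] by (intro sum.cong) (auto simp: ph)
          also have "\<dots> = cf i0" using i0 by (rule sumdelta2)
          also have "\<dots> = a (u, [])" using ainvk[of i0 k0] i0 tau_n e0 by (simp add: cf_def)
          finally show ?thesis using True Pair by simp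
        next
          case False
          have "\<And>i. phi r lam G 0 (vtx n i) p = 0"
            using False n0 by (auto simp: Pair phi_eq vtx_app intro!: sum.neutral)
          moreover have "a p = 0" using False Pair anil abig by (cases "w = []") auto
          ultimately show ?thesis by simp
        qed
      qed
    qed
    show "\<exists>c :: nat \<Rightarrow> 'k. psub a (\<lambda>p. \<Sum>i < gcd n d. c i * phi r lam G 0 (vtx n i) p) \<in> OmegaIdeal n"
    proof (intro exI)
      have "psub a (\<lambda>p. \<Sum>i < gcd n d. cf i * phi r lam G 0 (vtx n i) p) = pzero"
        by (subst aeq) (simp add: psub_def pzero_def)
      then show "psub a (\<lambda>p. \<Sum>i < gcd n d. cf i * phi r lam G 0 (vtx n i) p) \<in> OmegaIdeal n"
        using pzero_Omega by simp
    qed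
  qed
  show ?thesis using part1 part2 part3 by blast
qed

end
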